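(* For $\lambda,\mu\in\mathfrak a^*_{\mathbb C}$ let $d_{\lambda,\mu}:G\to\mathbb C$, $d_{\lambda,\mu}(g)=e^{(i\lambda+\rho)H(g)}e^{(i\mu+\rho)H(gw)}$. Then for all $\gamma,g\in G$, $$d_{\lambda,\mu}(\gamma g)=e^{(i\lambda+\rho)\langle\gamma\cdot o,\,\gamma g\cdot eM\rangle}\,e^{(i\mu+\rho)\langle\gamma\cdot o,\,\gamma g\cdot wM\rangle}\,d_{\lambda,\mu}(g).$$
   Context: $G$ is a connected noncompact real semisimple Lie group with finite center, $K$ maximal compact, $X=G/K$, $o=eK$; Iwasawa decomposition $g=k(g)\exp(H(g))n(g)$ with $H(g)\in\mathfrak a$; $M=Z_K(A)$, $M'=N_K(A)$, and $w\in M'$ a representative of the longest Weyl group element; $B=K/M$ with $G$-action $g\cdot kM=k(gk)M$; $\rho$ half the sum of positive restricted roots with multiplicities; horocycle bracket $\langle gK,kM\rangle=-H(g^{-1}k)\in\mathfrak a$; expressions like $(i\lambda+\rho)H(g)$ mean $(i\lambda+\rho)(H(g))$. *)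

theory Defs
  imports "HOL-Analysis.Analysis" "HOL-Algebra.Group"
begin

text \<open>Abstract Iwasawa data G = K exp(a) N: G a group, K and N subgroups,
  E : a -> G the exponential map onto A (an injective homomorphism from the
  additive group of the real vector space a), A normalises N, and every g in G
  has a unique decomposition g = k exp(X) n.\<close>

definition iwasawa_data ::
  "('g, 'b) monoid_scheme \<Rightarrow> 'g set \<Rightarrow> 'g set \<Rightarrow> ('a::real_vector \<Rightarrow> 'g) \<Rightarrow> bool" where
  "iwasawa_data G K N E \<longleftrightarrow>
     group G \<and> subgroup K G \<and> subgroup N G \<and>
     (\<forall>X. E X \<in> carrier G) \<and> E 0 = \<one>\<^bsub>G\<^esub> \<and>
     (\<forall>X Y. E (X + Y) = E X \<otimes>\<^bsub>G\<^esub> E Y) \<and> inj E \<and>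
     (\<forall>X. \<forall>n\<in>N. E X \<otimes>\<^bsub>G\<^esub> n \<otimes>\<^bsub>G\<^esub> inv\<^bsub>G\<^esub> (E X) \<in> N) \<and>
     (\<forall>g\<in>carrier G. \<exists>!(k, X, n). k \<in> K \<and> n \<in> N \<and> g = k \<otimes>\<^bsub>G\<^esub> E X \<otimes>\<^bsub>G\<^esub> n)"

definition iw_kan ::
  "('g, 'b) monoid_scheme \<Rightarrow> 'g set \<Rightarrow> 'g set \<Rightarrow> ('a::real_vector \<Rightarrow> 'g) \<Rightarrow> 'g \<Rightarrow> 'g \<times> 'a \<times> 'g" where
  "iw_kan G K N E g = (THE (k, X, n). k \<in> K \<and> n \<in> N \<and> g = k \<otimes>\<^bsub>G\<^esub> E X \<otimes>\<^bsub>G\<^esub> n)"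

definition iw_k where "iw_k G K N E g = fst (iw_kan G K N E g)"
definition iw_H where "iw_H G K N E g = fst (snd (iw_kan G K N E g))"

text \<open>Horocycle bracket <gK, kM> = - H(g^{-1} k), on representatives g, k.\<close>
definition horo where
  "horo G K N E g k = - iw_H G K N E (inv\<^bsub>G\<^esub> g \<otimes>\<^bsub>G\<^esub> k)"

text \<open>Action of G on B = K/M on representatives: g . kM = k(gk) M.\<close>
definition act_B where
  "act_B G K N E g k = iw_k G K N E (g \<otimes>\<^bsub>G\<^esub> k)"

text \<open>e^{(i nu + rho)(X)} for nu in a*_C (complex-valued real-linear) and rho in a*.\<close>
definition expf :: "('a \<Rightarrow> complex) \<Rightarrow> ('a \<Rightarrow> real) \<Rightarrow> 'a \<Rightarrow> complex" where
  "expf nu \<rho> X = exp (\<i> * nu X + complex_of_real (\<rho> X))"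

definition d_fun where
  "d_fun G K N E w \<rho> la mu g =
     expf la \<rho> (iw_H G K N E g) * expf mu \<rho> (iw_H G K N E (g \<otimes>\<^bsub>G\<^esub> w))"

end

theory Submission
  imports Defs
begin

lemma iw_unique:
  assumes D: "iwasawa_data G K N E" and k: "k \<in> K" and n: "n \<in> N"
    and g: "g = k \<otimes>\<^bsub>G\<^esub> E X \<otimes>\<^bsub>G\<^esub> n"
  shows "iw_kan G K N E g = (k, X, n)"
proof -
  interpret group G using D by (simp add: iwasawa_data_def)
  have sK: "subgroup K G" and sN: "subgroup N G" and EX: "E X \<in> carrier G"
    using D by (auto simp: iwasawa_data_def)
  have "g \<in> carrier G" unfolding g
    using subgroup.mem_carrier[OF sK k] subgroup.mem_carrier[OF sN n] EX by simp
  then have ex: "\<exists>!(k, X, n). k \<in> K \<and> n \<in> N \<and> g = k \<otimes>\<^bsub>G\<^esub> E X \<otimes>\<^bsub>G\<^esub> n"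
    using D by (simp add: iwasawa_data_def)
  show ?thesis unfolding iw_kan_def
    by (rule the1_equality[OF ex]) (use k n g in simp)
qed

lemma iw_exists:
  assumes D: "iwasawa_data G K N E" and g: "g \<in> carrier G"
  shows "iw_k G K N E g \<in> K \<and> snd (snd (iw_kan G K N E g)) \<in> N \<and>
     g = iw_k G K N E g \<otimes>\<^bsub>G\<^esub> E (iw_H G K N E g) \<otimes>\<^bsub>G\<^esub> snd (snd (iw_kan G K N E g))"
proof -
  have ex: "\<exists>!(k, X, n). k \<in> K \<and> n \<in> N \<and> g = k \<otimes>\<^bsub>G\<^esub> E X \<otimes>\<^bsub>G\<^esub> n"
    using D g by (simp add: iwasawa_data_def)
  have "(\<lambda>(k, X, n). k \<in> K \<and> n \<in> N \<and> g = k \<otimes>\<^bsub>G\<^esub> E X \<otimes>\<^bsub>G\<^esub> n) (iw_kan G K N E g)"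
    unfolding iw_kan_def by (rule theI'[OF ex])
  then show ?thesis unfolding iw_k_def iw_H_def by (auto split: prod.splits)
qed

lemma H_mult:
  assumes D: "iwasawa_data G K N E" and \<gamma>: "\<gamma> \<in> carrier G" and g: "g \<in> carrier G"
  shows "iw_H G K N E (\<gamma> \<otimes>\<^bsub>G\<^esub> g) =
     horo G K N E \<gamma> (iw_k G K N E (\<gamma> \<otimes>\<^bsub>G\<^esub> g)) + iw_H G K N E g"
proof -
  interpret group G using D by (simp add: iwasawa_data_def)
  have sK: "subgroup K G" and sN: "subgroup N G" and EC: "\<And>X. E X \<in> carrier G"
    and E0: "E 0 = \<one>\<^bsub>G\<^esub>" and Eadd: "\<And>X Y. E (X + Y) = E X \<otimes>\<^bsub>G\<^esub> E Y"
    and norm: "\<And>X n. n \<in> N \<Longrightarrow> E X \<otimes>\<^bsub>G\<^esub> n \<otimes>\<^bsub>G\<^esub> inv\<^bsub>G\<^esub> (E X) \<in> N"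
    using D by (auto simp: iwasawa_data_def)
  have Einv: "inv\<^bsub>G\<^esub> (E X) = E (-X)" for X
  proof -
    have "E (-X) \<otimes>\<^bsub>G\<^esub> E X = \<one>\<^bsub>G\<^esub>" using Eadd[of "-X" X] E0 by simp
    then show ?thesis using EC by (rule inv_equality) (rule EC)
  qed
  define h where "h = \<gamma> \<otimes>\<^bsub>G\<^esub> g"
  have h: "h \<in> carrier G" using \<gamma> g h_def by simp
  define k where "k = iw_k G K N E h"
  define A where "A = iw_H G K N E h"
  define n where "n = snd (snd (iw_kan G K N E h))"
  have k: "k \<in> K" and n: "n \<in> N" and hd: "h = k \<otimes>\<^bsub>G\<^esub> E A \<otimes>\<^bsub>G\<^esub> n"
    using iw_exists[OF D h] unfolding k_def A_def n_def by auto
  have kc: "k \<in> carrier G" by (rule subgroup.mem_carrier[OF sK k])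
  have nc: "n \<in> carrier G" by (rule subgroup.mem_carrier[OF sN n])
  define u where "u = inv\<^bsub>G\<^esub> \<gamma> \<otimes>\<^bsub>G\<^esub> k"
  have u: "u \<in> carrier G" using u_def \<gamma> kc by simp
  define k' where "k' = iw_k G K N E u"
  define A' where "A' = iw_H G K N E u"
  define n' where "n' = snd (snd (iw_kan G K N E u))"
  have k': "k' \<in> K" and n': "n' \<in> N" and ud: "u = k' \<otimes>\<^bsub>G\<^esub> E A' \<otimes>\<^bsub>G\<^esub> n'"
    using iw_exists[OF D u] unfolding k'_def A'_def n'_def by auto
  have k'c: "k' \<in> carrier G" by (rule subgroup.mem_carrier[OF sK k'])
  have n'c: "n' \<in> carrier G" by (rule subgroup.mem_carrier[OF sN n'])
  define m where "m = E (-A) \<otimes>\<^bsub>G\<^esub> n' \<otimes>\<^bsub>G\<^esub> inv\<^bsub>G\<^esub> (E (-A))"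
  have m: "m \<in> N" unfolding m_def by (rule norm[OF n'])
  have mc: "m \<in> carrier G" by (rule subgroup.mem_carrier[OF sN m])
  have mn: "m \<otimes>\<^bsub>G\<^esub> n \<in> N" by (rule subgroup.m_closed[OF sN m n])
  have "g = inv\<^bsub>G\<^esub> \<gamma> \<otimes>\<^bsub>G\<^esub> h" using h_def \<gamma> g by (simp add: m_assoc[symmetric])
  also have "\<dots> = u \<otimes>\<^bsub>G\<^esub> E A \<otimes>\<^bsub>G\<^esub> n" using hd u_def \<gamma> kc nc EC by (simp add: m_assoc)
  also have "\<dots> = k' \<otimes>\<^bsub>G\<^esub> E A' \<otimes>\<^bsub>G\<^esub> n' \<otimes>\<^bsub>G\<^esub> E A \<otimes>\<^bsub>G\<^esub> n" using ud by simp
  also have "\<dots> = k' \<otimes>\<^bsub>G\<^esub> E (A' + A) \<otimes>\<^bsub>G\<^esub> (m \<otimes>\<^bsub>G\<^esub> n)"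
  proof -
    have EAi: "E A \<otimes>\<^bsub>G\<^esub> E (-A) = \<one>\<^bsub>G\<^esub>"
      by (metis Eadd add.right_inverse E0)
    have iA: "inv\<^bsub>G\<^esub> (E (-A)) = E A" using Einv[of "-A"] by simp
    have "E A \<otimes>\<^bsub>G\<^esub> m = (E A \<otimes>\<^bsub>G\<^esub> E (-A)) \<otimes>\<^bsub>G\<^esub> (n' \<otimes>\<^bsub>G\<^esub> E A)"
      unfolding m_def iA using EC n'c by (simp only: m_assoc m_closed)
    also have "\<dots> = n' \<otimes>\<^bsub>G\<^esub> E A" unfolding EAi using EC n'c by simp
    finally have key: "E A \<otimes>\<^bsub>G\<^esub> m = n' \<otimes>\<^bsub>G\<^esub> E A" .
    have "k' \<otimes>\<^bsub>G\<^esub> E A' \<otimes>\<^bsub>G\<^esub> n' \<otimes>\<^bsub>G\<^esub> E A \<otimes>\<^bsub>G\<^esub> n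
        = k' \<otimes>\<^bsub>G\<^esub> E A' \<otimes>\<^bsub>G\<^esub> (n' \<otimes>\<^bsub>G\<^esub> E A) \<otimes>\<^bsub>G\<^esub> n"
      using EC k'c n'c nc by (simp only: m_assoc m_closed)
    also have "\<dots> = k' \<otimes>\<^bsub>G\<^esub> E A' \<otimes>\<^bsub>G\<^esub> (E A \<otimes>\<^bsub>G\<^esub> m) \<otimes>\<^bsub>G\<^esub> n"
      by (simp only: key)
    also have "\<dots> = k' \<otimes>\<^bsub>G\<^esub> (E A' \<otimes>\<^bsub>G\<^esub> E A) \<otimes>\<^bsub>G\<^esub> (m \<otimes>\<^bsub>G\<^esub> n)"
      using EC k'c mc nc by (simp only: m_assoc m_closed)
    finally show ?thesis by (simp only: Eadd)
  qed
  finally have "iw_kan G K N E g = (k', A' + A, m \<otimes>\<^bsub>G\<^esub> n)"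
    using iw_unique[OF D k' mn] by blast
  then have "iw_H G K N E g = A' + A" by (simp add: iw_H_def)
  then show ?thesis
    unfolding horo_def A'_def u_def k_def A_def h_def by simp
qed

lemma expf_add:
  assumes "linear \<rho>" "linear la"
  shows "expf la \<rho> (X + Y) = expf la \<rho> X * expf la \<rho> Y"
proof -
  have "\<rho> (X + Y) = \<rho> X + \<rho> Y" "la (X + Y) = la X + la Y"
    using assms by (auto simp: linear_add)
  then show ?thesis unfolding expf_def
    by (simp add: exp_add[symmetric] algebra_simps)
qed

theorem mainTheorem11:
  fixes G :: "('g, 'b) monoid_scheme" and K N :: "'g set"
    and E :: "'a::euclidean_space \<Rightarrow> 'g" and w \<gamma> g :: 'g
    and \<rho> :: "'a \<Rightarrow> real" and la mu :: "'a \<Rightarrow> complex"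
  assumes "iwasawa_data G K N E"
    and "w \<in> K" and "\<forall>X. w \<otimes>\<^bsub>G\<^esub> E X \<otimes>\<^bsub>G\<^esub> inv\<^bsub>G\<^esub> w \<in> range E"
    and "linear \<rho>" and "linear la" and "linear mu"
    and "\<gamma> \<in> carrier G" and "g \<in> carrier G"
  shows "d_fun G K N E w \<rho> la mu (\<gamma> \<otimes>\<^bsub>G\<^esub> g) =
    expf la \<rho> (horo G K N E \<gamma> (act_B G K N E (\<gamma> \<otimes>\<^bsub>G\<^esub> g) \<one>\<^bsub>G\<^esub>))
    * expf mu \<rho> (horo G K N E \<gamma> (act_B G K N E (\<gamma> \<otimes>\<^bsub>G\<^esub> g) w))
    * d_fun G K N E w \<rho> la mu g"
proof -
  interpret group G using assms(1) by (simp add: iwasawa_data_def)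
  have sK: "subgroup K G" using assms(1) by (simp add: iwasawa_data_def)
  have wc: "w \<in> carrier G" by (rule subgroup.mem_carrier[OF sK assms(2)])
  have gw: "g \<otimes>\<^bsub>G\<^esub> w \<in> carrier G" using wc assms(8) by simp
  have e1: "act_B G K N E (\<gamma> \<otimes>\<^bsub>G\<^esub> g) \<one>\<^bsub>G\<^esub> = iw_k G K N E (\<gamma> \<otimes>\<^bsub>G\<^esub> g)"
    using assms(7,8) by (simp add: act_B_def)
  have e2: "act_B G K N E (\<gamma> \<otimes>\<^bsub>G\<^esub> g) w = iw_k G K N E (\<gamma> \<otimes>\<^bsub>G\<^esub> (g \<otimes>\<^bsub>G\<^esub> w))"
    using assms(7,8) wc by (simp add: act_B_def m_assoc)
  have "(\<gamma> \<otimes>\<^bsub>G\<^esub> g) \<otimes>\<^bsub>G\<^esub> w = \<gamma> \<otimes>\<^bsub>G\<^esub> (g \<otimes>\<^bsub>G\<^esub> w)" using assms(7,8) wc by (simp add: m_assoc)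
  then show ?thesis
    unfolding d_fun_def e1 e2
    using H_mult[OF assms(1,7,8)] H_mult[OF assms(1,7) gw]
      expf_add[OF assms(4,5)] expf_add[OF assms(4,6)]
    by (simp add: algebra_simps)
qed

end
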